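(* Let $\lambda_1,\lambda_2,\lambda_1',\lambda_2',\sigma_1,\sigma_2,\sigma_1',\sigma_2'\in\mathbb{C}^*$ and $\eta_1,\eta_2,\eta_1',\eta_2'\in\mathbb{C}$ with $\lambda_1\neq\lambda_2$ and $\lambda_1'\neq\lambda_2'$. Then the irreducible $\mathcal{G}$-modules $\Omega(\lambda_1,\eta_1,0,\sigma_1)\otimes\Omega(\lambda_2,\eta_2,0,\sigma_2)$ and $\Omega(\lambda_1',\eta_1',0,\sigma_1')\otimes\Omega(\lambda_2',\eta_2',0,\sigma_2')$ are isomorphic if and only if either $(\lambda_1,\eta_1,\sigma_1)=(\lambda_1',\eta_1',\sigma_1')$ and $(\lambda_2,\eta_2,\sigma_2)=(\lambda_2',\eta_2',\sigma_2')$, or $(\lambda_1,\eta_1,\sigma_1)=(\lambda_2',\eta_2',\sigma_2')$ and $(\lambda_2,\eta_2,\sigma_2)=(\lambda_1',\eta_1',\sigma_1')$.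
   Context: The planar Galilean conformal algebra $\mathcal{G}$ is the complex Lie algebra with basis $\{L_m,H_m,I_m,J_m\mid m\in\mathbb{Z}\}$ and brackets $[L_m,L_n]=(n-m)L_{m+n}$, $[L_m,H_n]=nH_{m+n}$, $[L_m,I_n]=(n-m)I_{m+n}$, $[L_m,J_n]=(n-m)J_{m+n}$, $[H_m,I_n]=I_{m+n}$, $[H_m,J_n]=-J_{m+n}$, and $[H_m,H_n]=[I_m,I_n]=[J_m,J_n]=[I_m,J_n]=0$ for all $m,n\in\mathbb{Z}$. For $\lambda,\sigma\in\mathbb{C}^*$, $\eta\in\mathbb{C}$, the module $\Omega(\lambda,\eta,0,\sigma)$ is $\mathbb{C}[S,T]$ with $L_m f(S,T)=\lambda^m(T+mS+m\eta)f(S,T-m)$, $H_m f(S,T)=\lambda^m S f(S,T-m)$, $I_m f(S,T)=0$, $J_m f(S,T)=\lambda^m\sigma f(S+1,T-m)$. The tensor product of $\mathcal{G}$-modules has action $x(v\otimes w)=xv\otimes w+v\otimes xw$. (When $\lambda_1\neq\lambda_2$ these tensor products are irreducible.) *)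

theory Defs
  imports Complex_Main
begin

text \<open>Basis elements of the planar Galilean conformal algebra (the algebra acts on a module
 through its basis; linear extension is implicit).\<close>
datatype gen = L int | H int | I int | J int

text \<open>Polynomial functions in two variables (S,T); since the field is infinite this is the
 polynomial ring C[S,T].\<close>
definition poly2 :: "(complex \<times> complex \<Rightarrow> complex) set" where
  "poly2 = {f. \<exists>(c :: nat \<Rightarrow> nat \<Rightarrow> complex) (N :: nat).
      f = (\<lambda>(s,t). \<Sum>i\<le>N. \<Sum>j\<le>N. c i j * s ^ i * t ^ j)}"

text \<open>The module Omega(lambda, eta, 0, sigma) acting on C[S,T].\<close>
fun omega_act :: "complex \<Rightarrow> complex \<Rightarrow> complex \<Rightarrow> gen \<Rightarrow>
    (complex \<times> complex \<Rightarrow> complex) \<Rightarrow> (complex \<times> complex \<Rightarrow> complex)" where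
  "omega_act lam eta sig (L m) f =
     (\<lambda>(s,t). lam powi m * (t + of_int m * s + of_int m * eta) * f (s, t - of_int m))"
| "omega_act lam eta sig (H m) f = (\<lambda>(s,t). lam powi m * s * f (s, t - of_int m))"
| "omega_act lam eta sig (I m) f = (\<lambda>_. 0)"
| "omega_act lam eta sig (J m) f = (\<lambda>(s,t). lam powi m * sig * f (s + 1, t - of_int m))"

text \<open>Algebraic tensor product C[S1,T1] (x) C[S2,T2], realized as the span of the functions
 (u,v) |-> f(u) g(v), i.e. f (x) g is identified with f(S1,T1) g(S2,T2).\<close>
definition tensor_carrier :: "((complex \<times> complex) \<times> (complex \<times> complex) \<Rightarrow> complex) set" where
  "tensor_carrier = {F. \<exists>(n :: nat) fs gs. (\<forall>i<n. fs i \<in> poly2 \<and> gs i \<in> poly2) \<and>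
      F = (\<lambda>(u,v). \<Sum>i<n. fs i u * gs i v)}"

definition tensor_act ::
  "(gen \<Rightarrow> ('a \<Rightarrow> complex) \<Rightarrow> ('a \<Rightarrow> complex)) \<Rightarrow> (gen \<Rightarrow> ('b \<Rightarrow> complex) \<Rightarrow> ('b \<Rightarrow> complex))
     \<Rightarrow> gen \<Rightarrow> ('a \<times> 'b \<Rightarrow> complex) \<Rightarrow> ('a \<times> 'b \<Rightarrow> complex)" where
  "tensor_act a1 a2 x F = (\<lambda>(u,v). a1 x (\<lambda>u'. F (u',v)) u + a2 x (\<lambda>v'. F (u,v')) v)"

definition omega_tensor :: "complex \<Rightarrow> complex \<Rightarrow> complex \<Rightarrow> complex \<Rightarrow> complex \<Rightarrow> complex \<Rightarrow>
    gen \<Rightarrow> ((complex \<times> complex) \<times> (complex \<times> complex) \<Rightarrow> complex) \<Rightarrow>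
    ((complex \<times> complex) \<times> (complex \<times> complex) \<Rightarrow> complex)" where
  "omega_tensor l1 e1 s1 l2 e2 s2 = tensor_act (omega_act l1 e1 s1) (omega_act l2 e2 s2)"

definition module_iso :: "('a \<Rightarrow> complex) set \<Rightarrow> (gen \<Rightarrow> ('a \<Rightarrow> complex) \<Rightarrow> ('a \<Rightarrow> complex))
    \<Rightarrow> ('b \<Rightarrow> complex) set \<Rightarrow> (gen \<Rightarrow> ('b \<Rightarrow> complex) \<Rightarrow> ('b \<Rightarrow> complex))
    \<Rightarrow> (('a \<Rightarrow> complex) \<Rightarrow> ('b \<Rightarrow> complex)) \<Rightarrow> bool" where
  "module_iso M act M' act' \<phi> \<longleftrightarrow>
     bij_betw \<phi> M M' \<and>
     (\<forall>f\<in>M. \<forall>g\<in>M. \<phi> (\<lambda>p. f p + g p) = (\<lambda>q. \<phi> f q + \<phi> g q)) \<and>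
     (\<forall>c. \<forall>f\<in>M. \<phi> (\<lambda>p. c * f p) = (\<lambda>q. c * \<phi> f q)) \<and>
     (\<forall>x. \<forall>f\<in>M. \<phi> (act x f) = act' x (\<phi> f))"

definition isomorphic_modules :: "('a \<Rightarrow> complex) set \<Rightarrow> (gen \<Rightarrow> ('a \<Rightarrow> complex) \<Rightarrow> ('a \<Rightarrow> complex))
    \<Rightarrow> ('b \<Rightarrow> complex) set \<Rightarrow> (gen \<Rightarrow> ('b \<Rightarrow> complex) \<Rightarrow> ('b \<Rightarrow> complex)) \<Rightarrow> bool" where
  "isomorphic_modules M act M' act' \<longleftrightarrow> (\<exists>\<phi>. module_iso M act M' act' \<phi>)"

end

theory Submission
  imports Defs
begin


type_synonym X = "(complex \<times> complex) \<times> (complex \<times> complex)"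

definition tr :: "complex \<Rightarrow> complex \<Rightarrow> complex \<Rightarrow> complex \<Rightarrow> X \<Rightarrow> X" where
  "tr a b c d x = ((fst (fst x) + a, snd (fst x) + b), (fst (snd x) + c, snd (snd x) + d))"

lemma tr_comm: "tr a b c d (tr a' b' c' d' x) = tr a' b' c' d' (tr a b c d x)"
  by (simp add: tr_def algebra_simps)

fun Dk :: "nat \<Rightarrow> (X \<Rightarrow> complex) set" where
  "Dk 0 = {\<lambda>_. 0}"
| "Dk (Suc k) = {G. \<forall>a b c d. (\<lambda>x. G (tr a b c d x) - G x) \<in> Dk k}"

lemma DkS: "G \<in> Dk (Suc k) \<longleftrightarrow> (\<forall>a b c d. (\<lambda>x. G (tr a b c d x) - G x) \<in> Dk k)"
  by simp

lemma DkSI: "(\<And>a b c d. (\<lambda>x. G (tr a b c d x) - G x) \<in> Dk k) \<Longrightarrow> G \<in> Dk (Suc k)"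
  by simp

lemma DkSD: "G \<in> Dk (Suc k) \<Longrightarrow> (\<lambda>x. G (tr a b c d x) - G x) \<in> Dk k"
  by simp

declare Dk.simps(2)[simp del]

lemma Dk_lin: "G \<in> Dk k \<Longrightarrow> K \<in> Dk k \<Longrightarrow> (\<lambda>x. \<alpha> * G x + \<beta> * K x) \<in> Dk k"
proof (induction k arbitrary: G K)
  case 0 then show ?case by simp
next
  case (Suc k)
  show ?case
  proof (rule DkSI)
    fix a b c d
    have "(\<lambda>x. \<alpha> * (G (tr a b c d x) - G x) + \<beta> * (K (tr a b c d x) - K x)) \<in> Dk k"
      using Suc.IH[OF DkSD[OF Suc.prems(1)] DkSD[OF Suc.prems(2)]] by simp
    moreover have "(\<lambda>x. \<alpha> * (G (tr a b c d x) - G x) + \<beta> * (K (tr a b c d x) - K x))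
      = (\<lambda>x. \<alpha> * G (tr a b c d x) + \<beta> * K (tr a b c d x) - (\<alpha> * G x + \<beta> * K x))"
      by (simp add: algebra_simps)
    ultimately show "(\<lambda>x. \<alpha> * G (tr a b c d x) + \<beta> * K (tr a b c d x) - (\<alpha> * G x + \<beta> * K x)) \<in> Dk k"
      by simp
  qed
qed

lemma Dk_zero: "(\<lambda>_. 0) \<in> Dk k"
  by (induction k) (auto intro: DkSI)

lemma Dk_mono: "G \<in> Dk k \<Longrightarrow> G \<in> Dk (Suc k)"
proof (induction k arbitrary: G)
  case 0 then show ?case by (simp add: DkS)
next
  case (Suc k)
  show ?case by (rule DkSI, rule Suc.IH, rule DkSD[OF Suc.prems])
qed

lemma Dk_mono_le: "G \<in> Dk k \<Longrightarrow> k \<le> k' \<Longrightarrow> G \<in> Dk k'"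
  by (induction k' ) (auto intro: Dk_mono simp: le_Suc_eq)

lemma Dk_shift: "G \<in> Dk k \<Longrightarrow> (\<lambda>x. G (tr a b c d x)) \<in> Dk k"
proof (induction k arbitrary: G)
  case 0 then show ?case by simp
next
  case (Suc k)
  show ?case
  proof (rule DkSI)
    fix a' b' c' d'
    have "(\<lambda>x. G (tr a' b' c' d' x) - G x) \<in> Dk k" using Suc.prems by (rule DkSD)
    from Suc.IH[OF this] show "(\<lambda>x. G (tr a b c d (tr a' b' c' d' x)) - G (tr a b c d x)) \<in> Dk k"
      by (simp add: tr_comm)
  qed
qed

lemma Dk_mult_aux: "\<forall>a b G K. a + b = n \<longrightarrow> G \<in> Dk a \<longrightarrow> K \<in> Dk b \<longrightarrow> (\<lambda>x. G x * K x) \<in> Dk (a + b)"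
proof (induction n rule: less_induct)
  case (less n)
  show ?case
  proof (intro allI impI)
    fix a b G K assume n: "a + b = n" and G: "G \<in> Dk a" and K: "K \<in> Dk b"
    show "(\<lambda>x. G x * K x) \<in> Dk (a + b)"
    proof (cases a)
      case 0 then show ?thesis using G Dk_zero by simp
    next
      case (Suc a')
      note a = this
      show ?thesis
      proof (cases b)
        case 0 then show ?thesis using K Dk_zero by simp
      next
        case (Suc b')
        have "a + b = Suc (a' + Suc b')" using a Suc by simp
        moreover have "(\<lambda>x. G x * K x) \<in> Dk (Suc (a' + Suc b'))"
        proof (rule DkSI)
          fix p q r s
          let ?dG = "\<lambda>x. G (tr p q r s x) - G x"
          let ?dK = "\<lambda>x. K (tr p q r s x) - K x"
          let ?sK = "\<lambda>x. K (tr p q r s x)"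
          have dG: "?dG \<in> Dk a'" using G a by (simp add: DkS)
          have dK: "?dK \<in> Dk b'" using K Suc by (simp add: DkS)
          have sK: "?sK \<in> Dk b" using K by (rule Dk_shift)
          have 1: "(\<lambda>x. ?dG x * ?sK x) \<in> Dk (a' + Suc b')"
            using less.IH[rule_format, of "a' + b" a' b ?dG ?sK] dG sK n a Suc by simp
          have 2: "(\<lambda>x. G x * ?dK x) \<in> Dk (a' + Suc b')"
            using less.IH[rule_format, of "a + b'" a b' G ?dK] G dK n Suc a by simp
          have "(\<lambda>x. 1 * (?dG x * ?sK x) + 1 * (G x * ?dK x)) \<in> Dk (a' + Suc b')"
            using Dk_lin[OF 1 2, of 1 1] a Suc by simp
          moreover have "(\<lambda>x. 1 * (?dG x * ?sK x) + 1 * (G x * ?dK x)) =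
              (\<lambda>x. G (tr p q r s x) * K (tr p q r s x) - G x * K x)"
            by (simp add: fun_eq_iff algebra_simps)
          ultimately show "(\<lambda>x. G (tr p q r s x) * K (tr p q r s x) - G x * K x) \<in> Dk (a' + Suc b')"
            by simp
        qed
        ultimately show ?thesis by simp
      qed
    qed
  qed
qed

definition Dfin :: "(X \<Rightarrow> complex) \<Rightarrow> bool" where "Dfin G \<longleftrightarrow> (\<exists>k. G \<in> Dk k)"

lemma Dfin_mult: "Dfin G \<Longrightarrow> Dfin K \<Longrightarrow> Dfin (\<lambda>x. G x * K x)"
  unfolding Dfin_def using Dk_mult_aux by blast

lemma Dfin_add: "Dfin G \<Longrightarrow> Dfin K \<Longrightarrow> Dfin (\<lambda>x. G x + K x)"
proof -
  assume "Dfin G" "Dfin K"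
  then obtain k k' where "G \<in> Dk k" "K \<in> Dk k'" unfolding Dfin_def by blast
  then have "G \<in> Dk (max k k')" "K \<in> Dk (max k k')" using Dk_mono_le by auto
  from Dk_lin[OF this, of 1 1] show ?thesis unfolding Dfin_def by auto
qed

lemma Dfin_const: "Dfin (\<lambda>_. c)"
  unfolding Dfin_def by (rule exI[of _ 1]) (simp add: DkS)

lemma Dfin_coord1: "Dfin (\<lambda>x. fst (fst x))"
  unfolding Dfin_def by (rule exI[of _ 2]) (simp add: DkS tr_def numeral_2_eq_2)
lemma Dfin_coord2: "Dfin (\<lambda>x. snd (fst x))"
  unfolding Dfin_def by (rule exI[of _ 2]) (simp add: DkS tr_def numeral_2_eq_2)
lemma Dfin_coord3: "Dfin (\<lambda>x. fst (snd x))"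
  unfolding Dfin_def by (rule exI[of _ 2]) (simp add: DkS tr_def numeral_2_eq_2)
lemma Dfin_coord4: "Dfin (\<lambda>x. snd (snd x))"
  unfolding Dfin_def by (rule exI[of _ 2]) (simp add: DkS tr_def numeral_2_eq_2)

lemma Dfin_pow: "Dfin G \<Longrightarrow> Dfin (\<lambda>x. G x ^ n)"
  by (induction n) (auto intro: Dfin_mult Dfin_const)

lemma Dfin_sum: "finite A \<Longrightarrow> (\<And>a. a \<in> A \<Longrightarrow> Dfin (f a)) \<Longrightarrow> Dfin (\<lambda>x. \<Sum>a\<in>A. f a x)"
  by (induction A rule: finite_induct) (auto intro: Dfin_add Dfin_const)



fun Sk :: "nat \<Rightarrow> (int \<Rightarrow> complex) set" where
  "Sk 0 = {\<lambda>_. 0}"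
| "Sk (Suc k) = {f. (\<lambda>m. f (m + 1) - f m) \<in> Sk k}"

lemma SkS: "f \<in> Sk (Suc k) \<longleftrightarrow> (\<lambda>m. f (m + 1) - f m) \<in> Sk k" by simp
declare Sk.simps(2)[simp del]

lemma Sk_lin: "f \<in> Sk k \<Longrightarrow> g \<in> Sk k \<Longrightarrow> (\<lambda>m. \<alpha> * f m + \<beta> * g m) \<in> Sk k"
proof (induction k arbitrary: f g)
  case 0 then show ?case by simp
next
  case (Suc k)
  have "(\<lambda>m. \<alpha> * (f (m+1) - f m) + \<beta> * (g (m+1) - g m)) \<in> Sk k"
    using Suc.IH Suc.prems by (simp add: SkS)
  then show ?case by (simp add: SkS algebra_simps)
qed

lemma Sk_zero: "(\<lambda>_. 0) \<in> Sk k"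
  by (induction k) (auto simp: SkS)

lemma Sk_mono: "f \<in> Sk k \<Longrightarrow> f \<in> Sk (Suc k)"
proof (induction k arbitrary: f)
  case 0 then show ?case by (simp add: SkS)
next
  case (Suc k)
  show ?case using Suc.IH Suc.prems SkS by blast
qed

lemma Sk_mono_le: "f \<in> Sk k \<Longrightarrow> k \<le> k' \<Longrightarrow> f \<in> Sk k'"
  by (induction k') (auto intro: Sk_mono simp: le_Suc_eq)

lemma Sk_const: "(\<lambda>_. c) \<in> Sk 1"
  by (simp add: SkS)

lemma Sk_diff_in: "f \<in> Sk k \<Longrightarrow> (\<lambda>m. f (m + 1) - f m) \<in> Sk k"
proof (cases k)
  case 0 assume "f \<in> Sk k" then show ?thesis using 0 by simp
next
  case (Suc n) assume "f \<in> Sk k" then show ?thesis using Suc SkS Sk_mono by blast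
qed

lemma Sk_nilp: "f \<in> Sk k \<Longrightarrow> (\<And>m. f m = c * (f (m + 1) - f m)) \<Longrightarrow> f = (\<lambda>_. 0)"
proof (induction k arbitrary: f)
  case 0 then show ?case by simp
next
  case (Suc k)
  have d: "(\<lambda>m. f (m + 1) - f m) \<in> Sk k" using Suc.prems(1) unfolding SkS .
  have "(\<lambda>m. c * (f (m + 1) - f m) + 0 * (f (m + 1) - f m)) \<in> Sk k" by (rule Sk_lin[OF d d])
  moreover have "(\<lambda>m. c * (f (m + 1) - f m) + 0 * (f (m + 1) - f m)) = f"
  proof
    fix m show "c * (f (m + 1) - f m) + 0 * (f (m + 1) - f m) = f m" using Suc.prems(2)[of m] by simp
  qed
  ultimately have "f \<in> Sk k" by simp
  then show ?case using Suc by blast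
qed

lemma Sk_expo:
  fixes r :: complex
  assumes r0: "r \<noteq> 0" and r1: "r \<noteq> 1"
  shows "f \<in> Sk k \<Longrightarrow> (\<lambda>m. r powi m * f m) \<in> Sk j \<Longrightarrow> f = (\<lambda>_. 0)"
proof (induction j arbitrary: f)
  case 0
  then have "\<And>m. r powi m * f m = 0" by (simp add: fun_eq_iff)
  then show ?case using r0 by (simp add: fun_eq_iff)
next
  case (Suc j)
  define E where "E = (\<lambda>m. r * f (m + 1) - f m)"
  have Ef: "E = (\<lambda>m. (r - 1) * f m + r * (f (m + 1) - f m))"
    by (simp add: E_def fun_eq_iff algebra_simps)
  have "(\<lambda>m. (r - 1) * f m + r * (f (m + 1) - f m)) \<in> Sk k"
    using Sk_lin[OF Suc.prems(1) Sk_diff_in[OF Suc.prems(1)]] .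
  then have Ek: "E \<in> Sk k" using Ef by simp
  have "(\<lambda>m. r powi (m + 1) * f (m + 1) - r powi m * f m) \<in> Sk j"
    using Suc.prems(2) unfolding SkS by simp
  moreover have "(\<lambda>m. r powi (m + 1) * f (m + 1) - r powi m * f m) = (\<lambda>m. r powi m * E m)"
    using r0 by (simp add: E_def fun_eq_iff power_int_add algebra_simps)
  ultimately have "(\<lambda>m. r powi m * E m) \<in> Sk j" by simp
  from Suc.IH[OF Ek this] have E0: "\<And>m. E m = 0" by (simp add: fun_eq_iff)
  have "\<And>m. f m = (r / (1 - r)) * (f (m + 1) - f m)"
  proof -
    fix m
    have "(r - 1) * f m + r * (f (m + 1) - f m) = 0" using E0 Ef by (simp add: fun_eq_iff)
    then show "f m = (r / (1 - r)) * (f (m + 1) - f m)" using r1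
      by (simp add: field_simps)
  qed
  from Sk_nilp[OF Suc.prems(1) this] show ?case .
qed

lemma tr_add: "tr a b c d (tr a' b' c' d' x) = tr (a' + a) (b' + b) (c' + c) (d' + d) x"
  by (simp add: tr_def algebra_simps)

lemma Dk_seq: "G \<in> Dk k \<Longrightarrow>
  (\<lambda>m. G (tr (a + of_int m * a') (b + of_int m * b') (c + of_int m * c') (d + of_int m * d') x)) \<in> Sk k"
proof (induction k arbitrary: G)
  case 0 then show ?case by simp
next
  case (Suc k)
  have "(\<lambda>y. G (tr a' b' c' d' y) - G y) \<in> Dk k" using Suc.prems by (rule DkSD)
  from Suc.IH[OF this] show ?case
    by (simp add: SkS tr_add algebra_simps)
qed

lemma Dk_nilp: "G \<in> Dk k \<Longrightarrow> \<kappa> \<noteq> 0 \<Longrightarrow>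
  (\<And>x. \<kappa> * G x = \<alpha> * (G (tr a b c d x) - G x) + \<beta> * (G (tr a' b' c' d' x) - G x)) \<Longrightarrow> G = (\<lambda>_. 0)"
proof (induction k arbitrary: G)
  case 0 then show ?case by simp
next
  case (Suc k)
  have 1: "(\<lambda>x. G (tr a b c d x) - G x) \<in> Dk k" using Suc.prems(1) by (rule DkSD)
  have 2: "(\<lambda>x. G (tr a' b' c' d' x) - G x) \<in> Dk k" using Suc.prems(1) by (rule DkSD)
  have "(\<lambda>x. (\<alpha>/\<kappa>) * (G (tr a b c d x) - G x) + (\<beta>/\<kappa>) * (G (tr a' b' c' d' x) - G x)) \<in> Dk k"
    by (rule Dk_lin[OF 1 2])
  moreover have "(\<lambda>x. (\<alpha>/\<kappa>) * (G (tr a b c d x) - G x) + (\<beta>/\<kappa>) * (G (tr a' b' c' d' x) - G x)) = G"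
  proof
    fix x
    have "\<kappa> * G x = \<alpha> * (G (tr a b c d x) - G x) + \<beta> * (G (tr a' b' c' d' x) - G x)" by (rule Suc.prems(3))
    then have "(\<alpha> * (G (tr a b c d x) - G x) + \<beta> * (G (tr a' b' c' d' x) - G x)) / \<kappa> = \<kappa> * G x / \<kappa>"
      by simp
    then have "(\<alpha> * (G (tr a b c d x) - G x) + \<beta> * (G (tr a' b' c' d' x) - G x)) / \<kappa> = G x"
      using Suc.prems(2) by simp
    then show "(\<alpha>/\<kappa>) * (G (tr a b c d x) - G x) + (\<beta>/\<kappa>) * (G (tr a' b' c' d' x) - G x) = G x"
      by (simp add: add_divide_distrib)
  qed
  ultimately have "G \<in> Dk k" by simp
  then show ?case using Suc by blast
qed



lemma poly2_one: "(\<lambda>_. 1) \<in> poly2"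
  unfolding poly2_def
  by (rule CollectI, rule exI[of _ "\<lambda>i j. 1"], rule exI[of _ 0]) (simp add: fun_eq_iff)

lemma poly2_lin: "(\<lambda>(s,t). a * s + b * t + c) \<in> poly2"
  unfolding poly2_def
  apply (rule CollectI, rule exI[of _ "\<lambda>i j. if i = 0 \<and> j = 0 then c else if i = 1 \<and> j = 0 then a
     else if i = 0 \<and> j = 1 then b else 0"], rule exI[of _ 1])
  apply (simp add: fun_eq_iff)
  done

lemma poly2_scale: "f \<in> poly2 \<Longrightarrow> (\<lambda>u. a * f u) \<in> poly2"
  unfolding poly2_def
proof (clarify)
  fix c :: "nat \<Rightarrow> nat \<Rightarrow> complex" and N :: nat
  show "\<exists>c' N'. (\<lambda>u. a * (case u of (s, t) \<Rightarrow> \<Sum>i\<le>N. \<Sum>j\<le>N. c i j * s ^ i * t ^ j)) =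
             (\<lambda>(s, t). \<Sum>i\<le>N'. \<Sum>j\<le>N'. c' i j * s ^ i * t ^ j)"
    by (rule exI[of _ "\<lambda>i j. a * c i j"], rule exI[of _ N])
       (simp add: fun_eq_iff sum_distrib_left mult.assoc split: prod.splits)
qed

lemma tc_scale: "F \<in> tensor_carrier \<Longrightarrow> (\<lambda>p. a * F p) \<in> tensor_carrier"
  unfolding tensor_carrier_def
proof (clarify)
  fix n :: nat and fs gs :: "nat \<Rightarrow> complex \<times> complex \<Rightarrow> complex" assume h: "\<forall>i<n. fs i \<in> poly2 \<and> gs i \<in> poly2"
  show "\<exists>(n'::nat) fs' gs'. (\<forall>i<n'. fs' i \<in> poly2 \<and> gs' i \<in> poly2) \<and>
      (\<lambda>p. a * (case p of (u, v) \<Rightarrow> \<Sum>i<n. fs i u * gs i v)) = (\<lambda>(u, v). \<Sum>i<n'. fs' i u * gs' i v)"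
    apply (rule exI[where x=n], rule exI[where x="\<lambda>i u. a * fs i u"], rule exI[where x=gs])
    using h poly2_scale by (auto simp: fun_eq_iff sum_distrib_left mult.assoc)
qed

lemma sum_lessThan_add_split: "(\<Sum>i<(n::nat) + k. h i) = (\<Sum>i<n. h i) + (\<Sum>i<k. h (n + i))"
  by (induction k) (simp_all add: add.assoc)

lemma tc_add: "F \<in> tensor_carrier \<Longrightarrow> F' \<in> tensor_carrier \<Longrightarrow> (\<lambda>p. F p + F' p) \<in> tensor_carrier"
  unfolding tensor_carrier_def
proof (clarify)
  fix n n' :: nat and fs gs fs' gs' :: "nat \<Rightarrow> complex \<times> complex \<Rightarrow> complex" assume h: "\<forall>i<n. fs i \<in> poly2 \<and> gs i \<in> poly2"
    and h': "\<forall>i<n'. fs' i \<in> poly2 \<and> gs' i \<in> poly2"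
  define FS where "FS = (\<lambda>i. if i < n then fs i else fs' (i - n))"
  define GS where "GS = (\<lambda>i. if i < n then gs i else gs' (i - n))"
  have 1: "\<forall>i<n + n'. FS i \<in> poly2 \<and> GS i \<in> poly2"
    using h h' by (auto simp: FS_def GS_def)
  have 2: "(\<lambda>p. (case p of (u, v) \<Rightarrow> \<Sum>i<n. fs i u * gs i v) + (case p of (u, v) \<Rightarrow> \<Sum>i<n'. fs' i u * gs' i v))
     = (\<lambda>(u, v). \<Sum>i<n + n'. FS i u * GS i v)"
    by (simp add: fun_eq_iff sum_lessThan_add_split FS_def GS_def split: prod.splits)
  show "\<exists>(n''::nat) fs'' gs''. (\<forall>i<n''. fs'' i \<in> poly2 \<and> gs'' i \<in> poly2) \<and>
      (\<lambda>p. (case p of (u, v) \<Rightarrow> \<Sum>i<n. fs i u * gs i v) + (case p of (u, v) \<Rightarrow> \<Sum>i<n'. fs' i u * gs' i v))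
       = (\<lambda>(u, v). \<Sum>i<n''. fs'' i u * gs'' i v)"
    using 1 2 by blast
qed

lemma tc_comb: "F \<in> tensor_carrier \<Longrightarrow> F' \<in> tensor_carrier \<Longrightarrow> (\<lambda>p. a * F p + F' p) \<in> tensor_carrier"
  using tc_add[OF tc_scale] by blast

lemma tc_one: "(\<lambda>_. 1) \<in> tensor_carrier"
  unfolding tensor_carrier_def
  by (rule CollectI, rule exI[of _ 1], rule exI[of _ "\<lambda>_ _. 1"], rule exI[of _ "\<lambda>_ _. 1"])
     (simp add: poly2_one fun_eq_iff)

lemma tc_sep: "f \<in> poly2 \<Longrightarrow> g \<in> poly2 \<Longrightarrow> (\<lambda>(u,w). f u + g w) \<in> tensor_carrier"
  unfolding tensor_carrier_def
  apply (rule CollectI, rule exI[of _ 2], rule exI[of _ "\<lambda>i. if i = 0 then f else (\<lambda>_. 1)"],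
    rule exI[of _ "\<lambda>i. if i = 0 then (\<lambda>_. 1) else g"])
  apply (auto simp: poly2_one fun_eq_iff numeral_2_eq_2)
  done

lemma poly2_Dfin: "f \<in> poly2 \<Longrightarrow> Dfin (\<lambda>x. f (fst x)) \<and> Dfin (\<lambda>x. f (snd x))"
  unfolding poly2_def
proof (clarify)
  fix c :: "nat \<Rightarrow> nat \<Rightarrow> complex" and N :: nat
  have "Dfin (\<lambda>x. \<Sum>i\<le>N. \<Sum>j\<le>N. c i j * fst (fst x) ^ i * snd (fst x) ^ j)"
    by (intro Dfin_sum Dfin_mult Dfin_pow Dfin_const Dfin_coord1 Dfin_coord2) auto
  moreover have "Dfin (\<lambda>x. \<Sum>i\<le>N. \<Sum>j\<le>N. c i j * fst (snd x) ^ i * snd (snd x) ^ j)"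
    by (intro Dfin_sum Dfin_mult Dfin_pow Dfin_const Dfin_coord3 Dfin_coord4) auto
  ultimately show "Dfin (\<lambda>x. (case fst x of (s, t) \<Rightarrow> \<Sum>i\<le>N. \<Sum>j\<le>N. c i j * s ^ i * t ^ j)) \<and>
       Dfin (\<lambda>x. (case snd x of (s, t) \<Rightarrow> \<Sum>i\<le>N. \<Sum>j\<le>N. c i j * s ^ i * t ^ j))"
    by (simp add: case_prod_beta)
qed

lemma tc_Dfin: "F \<in> tensor_carrier \<Longrightarrow> Dfin F"
  unfolding tensor_carrier_def
proof (clarify)
  fix n :: nat and fs gs :: "nat \<Rightarrow> complex \<times> complex \<Rightarrow> complex" assume h: "\<forall>i<n. fs i \<in> poly2 \<and> gs i \<in> poly2"
  have "Dfin (\<lambda>x. \<Sum>i<n. fs i (fst x) * gs i (snd x))"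
    using h poly2_Dfin by (intro Dfin_sum Dfin_mult) auto
  moreover have "(\<lambda>x. \<Sum>i<n. fs i (fst x) * gs i (snd x)) = (\<lambda>(u, v). \<Sum>i<n. fs i u * gs i v)"
    by (simp add: fun_eq_iff)
  ultimately show "Dfin (\<lambda>(u, v). \<Sum>i<n. fs i u * gs i v)" by simp
qed



definition invG :: "(X \<Rightarrow> complex) \<Rightarrow> bool" where
  "invG G \<longleftrightarrow> (\<forall>s t a b m. G ((s, t - of_int m), (a, b)) = G ((s, t), (a, b))) \<and>
               (\<forall>s t a b m. G ((a, b), (s, t - of_int m)) = G ((a, b), (s, t)))"

lemma J_act: "omega_tensor l1 e1 s1 l2 e2 s2 (J m) G ((s,t),(s',t')) =
   l1 powi m * s1 * G ((s+1, t - of_int m),(s',t')) + l2 powi m * s2 * G ((s,t),(s'+1, t' - of_int m))"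
  by (simp add: omega_tensor_def tensor_act_def)

lemma eigJ:
  assumes l1: "l1 \<noteq> 0" and l2: "l2 \<noteq> 0" and l12: "l1 \<noteq> l2" and s1: "s1 \<noteq> 0" and s2: "s2 \<noteq> 0"
    and D: "Dfin G" and G0: "G \<noteq> (\<lambda>_. 0)"
    and eig: "\<And>m. omega_tensor l1 e1 s1 l2 e2 s2 (J m) G = (\<lambda>q. c m * G q)"
  shows "\<forall>m. c m = s1 * l1 powi m + s2 * l2 powi m" and "invG G"
proof -
  obtain k where k: "G \<in> Dk k" using D unfolding Dfin_def by blast
  have pt: "c m * G x = l1 powi m * s1 * G (tr 1 (- of_int m) 0 0 x) + l2 powi m * s2 * G (tr 0 0 1 (- of_int m) x)"
    for m x
  proof -
    obtain s t s' t' where x: "x = ((s,t),(s',t'))" by (metis prod.collapse)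
    have "c m * G x = omega_tensor l1 e1 s1 l2 e2 s2 (J m) G x" using fun_cong[OF eig[of m], of x] by simp
    also have "\<dots> = l1 powi m * s1 * G (tr 1 (- of_int m) 0 0 x) + l2 powi m * s2 * G (tr 0 0 1 (- of_int m) x)"
      unfolding x J_act by (simp add: tr_def)
    finally show ?thesis .
  qed
  have ceq: "c m = s1 * l1 powi m + s2 * l2 powi m" for m
  proof (rule ccontr)
    assume ne: "c m \<noteq> s1 * l1 powi m + s2 * l2 powi m"
    have "\<And>x. (c m - (s1 * l1 powi m + s2 * l2 powi m)) * G x =
        (l1 powi m * s1) * (G (tr 1 (- of_int m) 0 0 x) - G x) + (l2 powi m * s2) * (G (tr 0 0 1 (- of_int m) x) - G x)"
      using pt by (simp add: algebra_simps)
    from Dk_nilp[OF k _ this] ne have "G = (\<lambda>_. 0)" by simp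
    with G0 show False by simp
  qed
  then show "\<forall>m. c m = s1 * l1 powi m + s2 * l2 powi m" by blast
  have zero: "(l1 powi m * s1) * (G (tr 1 (- of_int m) 0 0 x) - G x) + (l2 powi m * s2) * (G (tr 0 0 1 (- of_int m) x) - G x) = 0"
    for m x using pt[of m x] ceq[of m] by (simp add: algebra_simps)
  have inv1: "G (tr 1 (- of_int m) 0 0 x) = G x \<and> G (tr 0 0 1 (- of_int m) x) = G x" for m x
  proof -
    define f where "f = (\<lambda>m. G (tr 1 (- of_int m) 0 0 x) - G x)"
    define g where "g = (\<lambda>m. G (tr 0 0 1 (- of_int m) x) - G x)"
    have fs: "(\<lambda>m. G (tr 1 (- of_int m) 0 0 x)) \<in> Sk (Suc k)"
      using Sk_mono[OF Dk_seq[OF k, of 1 0 0 "-1" 0 0 0 0 x]] by simp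
    have gs: "(\<lambda>m. G (tr 0 0 1 (- of_int m) x)) \<in> Sk (Suc k)"
      using Sk_mono[OF Dk_seq[OF k, of 0 0 0 0 1 0 0 "-1" x]] by simp
    have cs: "(\<lambda>_. G x) \<in> Sk (Suc k)" using Sk_mono_le[OF Sk_const] by simp
    have fS: "f \<in> Sk (Suc k)" using Sk_lin[OF fs cs, of 1 "-1"] by (simp add: f_def)
    have gS: "g \<in> Sk (Suc k)" using Sk_lin[OF gs cs, of 1 "-1"] by (simp add: g_def)
    have f1: "(\<lambda>m. s1 * f m) \<in> Sk (Suc k)" using Sk_lin[OF fS fS, of s1 0] by simp
    have g1: "(\<lambda>m. (l1 / l2) powi m * (s1 * f m)) = (\<lambda>m. (- s2) * g m)"
    proof
      fix m
      have "(l1 powi m * s1) * f m + (l2 powi m * s2) * g m = 0" using zero[of m x] by (simp add: f_def g_def)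
      then show "(l1 / l2) powi m * (s1 * f m) = (- s2) * g m"
        using l2 by (simp add: power_int_divide_distrib field_simps power_int_not_zero eq_neg_iff_add_eq_0)
    qed
    have "(\<lambda>m. (- s2) * g m) \<in> Sk (Suc k)" using Sk_lin[OF gS gS, of "-s2" 0] by simp
    then have "(\<lambda>m. (l1 / l2) powi m * (s1 * f m)) \<in> Sk (Suc k)" using g1 by simp
    from Sk_expo[OF _ _ f1 this] l1 l2 l12 have "(\<lambda>m. s1 * f m) = (\<lambda>_. 0)" by simp
    then have fz: "f m = 0" using s1 by (simp add: fun_eq_iff)
    have "(l2 powi m * s2) * g m = 0" using zero[of m x] fz by (simp add: f_def g_def)
    then have "g m = 0" using l2 s2 by (simp add: power_int_not_zero)
    with fz show ?thesis by (simp add: f_def g_def)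
  qed
  show "invG G"
    unfolding invG_def
  proof (intro conjI allI)
    fix s t a b m
    have "G ((s, t - of_int m), (a, b)) = G (tr 1 (- of_int m) 0 0 ((s - 1, t), (a, b)))" by (simp add: tr_def)
    also have "\<dots> = G ((s - 1, t), (a, b))" using inv1 by blast
    also have "\<dots> = G (tr 1 (- of_int 0) 0 0 ((s - 1, t), (a, b)))" using inv1 by metis
    also have "\<dots> = G ((s, t), (a, b))" by (simp add: tr_def)
    finally show "G ((s, t - of_int m), (a, b)) = G ((s, t), (a, b))" .
    have "G ((a, b), (s, t - of_int m)) = G (tr 0 0 1 (- of_int m) ((a, b), (s - 1, t)))" by (simp add: tr_def)
    also have "\<dots> = G ((a, b), (s - 1, t))" using inv1 by blast
    also have "\<dots> = G (tr 0 0 1 (- of_int 0) ((a, b), (s - 1, t)))" using inv1 by metis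
    also have "\<dots> = G ((a, b), (s, t))" by (simp add: tr_def)
    finally show "G ((a, b), (s, t - of_int m)) = G ((a, b), (s, t))" .
  qed
qed



lemma act_L_inv: "invG G \<Longrightarrow> omega_tensor l1 e1 s1 l2 e2 s2 (L m) G ((s,t),(s',t')) =
  (l1 powi m * (t + of_int m * s + of_int m * e1) + l2 powi m * (t' + of_int m * s' + of_int m * e2)) * G ((s,t),(s',t'))"
  unfolding invG_def by (simp add: omega_tensor_def tensor_act_def algebra_simps)

lemma act_H_inv: "invG G \<Longrightarrow> omega_tensor l1 e1 s1 l2 e2 s2 (H m) G ((s,t),(s',t')) =
  (l1 powi m * s + l2 powi m * s') * G ((s,t),(s',t'))"
  unfolding invG_def by (simp add: omega_tensor_def tensor_act_def algebra_simps)

definition Xop :: "(gen \<Rightarrow> (X \<Rightarrow> complex) \<Rightarrow> (X \<Rightarrow> complex)) \<Rightarrow> complex \<Rightarrow> complex \<Rightarrow> (X \<Rightarrow> complex) \<Rightarrow> (X \<Rightarrow> complex)" where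
  "Xop act \<sigma>1 \<sigma>2 F = (\<lambda>p. 1 * act (L 1) F p + ((-1) * act (H 1) F p + ((- \<sigma>1) * act (L 0) F p +
      (\<sigma>2 * act (L (-1)) F p + \<sigma>2 * act (H (-1)) F p))))"

definition Yop :: "(gen \<Rightarrow> (X \<Rightarrow> complex) \<Rightarrow> (X \<Rightarrow> complex)) \<Rightarrow> complex \<Rightarrow> complex \<Rightarrow> (X \<Rightarrow> complex) \<Rightarrow> (X \<Rightarrow> complex)" where
  "Yop act \<sigma>1 \<sigma>2 F = (\<lambda>p. 1 * act (L 2) F p + ((-2) * act (H 2) F p + ((- \<sigma>1) * act (L 1) F p +
      (\<sigma>1 * act (H 1) F p + \<sigma>2 * act (L 0) F p))))"

lemma Xop_inv: "invG G \<Longrightarrow> l1 \<noteq> 0 \<Longrightarrow> l2 \<noteq> 0 \<Longrightarrow>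
  Xop (omega_tensor l1 e1 s1 l2 e2 s2) (l1 + l2) (l1 * l2) G = (\<lambda>p. ((l1 - l2) * (e1 - e2)) * G p)"
proof
  fix p :: X assume i: "invG G" and l: "l1 \<noteq> 0" "l2 \<noteq> 0"
  obtain s t s' t' where p: "p = ((s,t),(s',t'))" by (metis prod.collapse)
  show "Xop (omega_tensor l1 e1 s1 l2 e2 s2) (l1 + l2) (l1 * l2) G p = ((l1 - l2) * (e1 - e2)) * G p"
    unfolding Xop_def p act_L_inv[OF i] act_H_inv[OF i] using l
    by (simp add: power_int_minus field_simps)
qed

lemma Yop_inv: "invG G \<Longrightarrow>
  Yop (omega_tensor l1 e1 s1 l2 e2 s2) (l1 + l2) (l1 * l2) G = (\<lambda>p. ((l1 - l2) * (l1 * e1 - l2 * e2)) * G p)"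
proof
  fix p :: X assume i: "invG G"
  obtain s t s' t' where p: "p = ((s,t),(s',t'))" by (metis prod.collapse)
  show "Yop (omega_tensor l1 e1 s1 l2 e2 s2) (l1 + l2) (l1 * l2) G p = ((l1 - l2) * (l1 * e1 - l2 * e2)) * G p"
    unfolding Yop_def p act_L_inv[OF i] act_H_inv[OF i]
    by (simp add: power2_eq_square algebra_simps)
qed

lemma invG_one: "invG (\<lambda>_. 1)" by (simp add: invG_def)

lemma tc_actL: "omega_tensor l1 e1 s1 l2 e2 s2 (L m) (\<lambda>_. 1) \<in> tensor_carrier"
proof -
  have "omega_tensor l1 e1 s1 l2 e2 s2 (L m) (\<lambda>_. 1) =
    (\<lambda>(u,w). (\<lambda>(s,t). (l1 powi m * of_int m) * s + l1 powi m * t + l1 powi m * of_int m * e1) u +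
             (\<lambda>(s,t). (l2 powi m * of_int m) * s + l2 powi m * t + l2 powi m * of_int m * e2) w)"
    by (simp add: fun_eq_iff omega_tensor_def tensor_act_def algebra_simps)
  then show ?thesis by (simp only:) (rule tc_sep[OF poly2_lin poly2_lin])
qed

lemma tc_actH: "omega_tensor l1 e1 s1 l2 e2 s2 (H m) (\<lambda>_. 1) \<in> tensor_carrier"
proof -
  have "omega_tensor l1 e1 s1 l2 e2 s2 (H m) (\<lambda>_. 1) =
    (\<lambda>(u,w). (\<lambda>(s,t). l1 powi m * s + 0 * t + 0) u + (\<lambda>(s,t). l2 powi m * s + 0 * t + 0) w)"
    by (simp add: fun_eq_iff omega_tensor_def tensor_act_def algebra_simps)
  then show ?thesis by (simp only:) (rule tc_sep[OF poly2_lin poly2_lin])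
qed

lemma iso_scal: "module_iso M act M' act' \<phi> \<Longrightarrow> f \<in> M \<Longrightarrow> \<phi> (\<lambda>p. a * f p) = (\<lambda>q. a * \<phi> f q)"
  unfolding module_iso_def by blast

lemma iso_comb: "module_iso tensor_carrier act M' act' \<phi> \<Longrightarrow> f \<in> tensor_carrier \<Longrightarrow> g \<in> tensor_carrier \<Longrightarrow>
   \<phi> (\<lambda>p. a * f p + g p) = (\<lambda>q. a * \<phi> f q + \<phi> g q)"
proof -
  assume iso: "module_iso tensor_carrier act M' act' \<phi>" and f: "f \<in> tensor_carrier" and g: "g \<in> tensor_carrier"
  have af: "(\<lambda>p. a * f p) \<in> tensor_carrier" using f by (rule tc_scale)
  have add: "\<forall>f\<in>tensor_carrier. \<forall>g\<in>tensor_carrier. \<phi> (\<lambda>p. f p + g p) = (\<lambda>q. \<phi> f q + \<phi> g q)"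
    using iso unfolding module_iso_def by blast
  have "\<phi> (\<lambda>p. a * f p + g p) = (\<lambda>q. \<phi> (\<lambda>p. a * f p) q + \<phi> g q)"
    using add[rule_format, OF af g] by simp
  then show ?thesis using iso_scal[OF iso f] by simp
qed

lemma iso_act: "module_iso M act M' act' \<phi> \<Longrightarrow> f \<in> M \<Longrightarrow> \<phi> (act x f) = act' x (\<phi> f)"
  unfolding module_iso_def by blast

lemma iso_Xop: assumes iso: "module_iso tensor_carrier act tensor_carrier act' \<phi>" and F: "F \<in> tensor_carrier"
  and m: "\<And>m. act (L m) F \<in> tensor_carrier" "\<And>m. act (H m) F \<in> tensor_carrier"
  shows "\<phi> (Xop act \<sigma>1 \<sigma>2 F) = Xop act' \<sigma>1 \<sigma>2 (\<phi> F)"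
    and "\<phi> (Yop act \<sigma>1 \<sigma>2 F) = Yop act' \<sigma>1 \<sigma>2 (\<phi> F)"
  unfolding Xop_def Yop_def
  by (simp_all only: iso_comb[OF iso] iso_scal[OF iso] tc_comb tc_scale m iso_act[OF iso F])



lemma root_match:
  fixes l1 l2 l1' l2' s1 s2 s1' s2' :: complex
  assumes E0: "s1 + s2 = s1' + s2'" and E1: "s1 * l1 + s2 * l2 = s1' * l1' + s2' * l2'"
    and E2: "s1 * l1^2 + s2 * l2^2 = s1' * l1'^2 + s2' * l2'^2"
    and E3: "s1 * l1^3 + s2 * l2^3 = s1' * l1'^3 + s2' * l2'^3"
  shows "s1 * (l1 - l2) * (l1 - l1') * (l1 - l2') = 0"
proof -
  have "s1 * (l1 - l2) * (l1 - l1') * (l1 - l2') =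
    (s1 * l1^3 + s2 * l2^3 - (s1' * l1'^3 + s2' * l2'^3))
    - (l2 + l1' + l2') * (s1 * l1^2 + s2 * l2^2 - (s1' * l1'^2 + s2' * l2'^2))
    + (l2 * l1' + l2 * l2' + l1' * l2') * (s1 * l1 + s2 * l2 - (s1' * l1' + s2' * l2'))
    - l2 * l1' * l2' * (s1 + s2 - (s1' + s2'))"
    by (simp add: algebra_simps power2_eq_square power3_eq_cube)
  also have "\<dots> = 0" using E0 E1 E2 E3 by simp
  finally show ?thesis .
qed

lemma param_match:
  fixes l1 l2 l1' l2' s1 s2 s1' s2' :: complex
  assumes "l1 \<noteq> l2" "l1' \<noteq> l2'" "s1 \<noteq> 0" "s2 \<noteq> 0"
    and E0: "s1 + s2 = s1' + s2'" and E1: "s1 * l1 + s2 * l2 = s1' * l1' + s2' * l2'"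
    and E2: "s1 * l1^2 + s2 * l2^2 = s1' * l1'^2 + s2' * l2'^2"
    and E3: "s1 * l1^3 + s2 * l2^3 = s1' * l1'^3 + s2' * l2'^3"
  shows "(l1 = l1' \<and> l2 = l2' \<and> s1 = s1' \<and> s2 = s2') \<or> (l1 = l2' \<and> l2 = l1' \<and> s1 = s2' \<and> s2 = s1')"
proof -
  have a: "l1 = l1' \<or> l1 = l2'" using root_match[OF E0 E1 E2 E3] assms(1,3) by simp
  have E0': "s2 + s1 = s1' + s2'" and E1': "s2 * l2 + s1 * l1 = s1' * l1' + s2' * l2'"
    and E2': "s2 * l2^2 + s1 * l1^2 = s1' * l1'^2 + s2' * l2'^2"
    and E3': "s2 * l2^3 + s1 * l1^3 = s1' * l1'^3 + s2' * l2'^3" using E0 E1 E2 E3 by (simp_all add: add.commute)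
  have b: "l2 = l1' \<or> l2 = l2'" using root_match[OF E0' E1' E2' E3'] assms(1,4) by auto
  show ?thesis
  proof (cases "l1 = l1'")
    case True
    then have l2: "l2 = l2'" using a b assms(1,2) by auto
    have s2': "s2' = s1 + s2 - s1'" using E0 by (simp add: algebra_simps)
    have "(s1 - s1') * (l1 - l2) = s1 * l1 + s2 * l2 - (s1' * l1 + (s1 + s2 - s1') * l2)"
      by (simp add: algebra_simps)
    also have "\<dots> = 0" using E1 True l2 s2' by simp
    finally have "(s1 - s1') * (l1 - l2) = 0" .
    then have "s1 = s1'" using assms(1) by simp
    then show ?thesis using E0 True l2 by simp
  next
    case False
    then have l1: "l1 = l2'" and l2: "l2 = l1'" using a b assms(1,2) by auto
    have s1': "s1' = s1 + s2 - s2'" using E0 by (simp add: algebra_simps)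
    have "(s1 - s2') * (l1 - l2) = s1 * l1 + s2 * l2 - ((s1 + s2 - s2') * l2 + s2' * l1)"
      by (simp add: algebra_simps)
    also have "\<dots> = 0" using E1 l1 l2 s1' by simp
    finally have "(s1 - s2') * (l1 - l2) = 0" .
    then have "s1 = s2'" using assms(1) by simp
    then show ?thesis using E0 l1 l2 by (simp add: add.commute)
  qed
qed

definition sw :: "(X \<Rightarrow> complex) \<Rightarrow> (X \<Rightarrow> complex)" where "sw F = (\<lambda>p. F (snd p, fst p))"

lemma sw_tc: "F \<in> tensor_carrier \<Longrightarrow> sw F \<in> tensor_carrier"
proof -
  assume "F \<in> tensor_carrier"
  then obtain n :: nat and fs gs :: "nat \<Rightarrow> complex \<times> complex \<Rightarrow> complex" where
    h: "\<forall>i<n. fs i \<in> poly2 \<and> gs i \<in> poly2" and F: "F = (\<lambda>(u, v). \<Sum>i<n. fs i u * gs i v)"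
    unfolding tensor_carrier_def by blast
  have "sw F = (\<lambda>(u, v). \<Sum>i<n. gs i u * fs i v)"
    by (simp add: F sw_def fun_eq_iff mult.commute)
  then show ?thesis unfolding tensor_carrier_def using h by blast
qed

lemma sw_sw: "sw (sw F) = F" by (simp add: sw_def)

lemma sw_iso: "module_iso tensor_carrier (omega_tensor l1 e1 s1 l2 e2 s2) tensor_carrier (omega_tensor l2 e2 s2 l1 e1 s1) sw"
  unfolding module_iso_def
proof (intro conjI ballI allI)
  show "bij_betw sw tensor_carrier tensor_carrier"
    by (rule bij_betw_byWitness[where f'=sw]) (auto simp: sw_tc sw_sw)
next
  fix f g show "sw (\<lambda>p. f p + g p) = (\<lambda>q. sw f q + sw g q)" by (simp add: sw_def)
next
  fix c f show "sw (\<lambda>p. c * f p) = (\<lambda>q. c * sw f q)" by (simp add: sw_def)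
next
  fix x f
  show "sw (omega_tensor l1 e1 s1 l2 e2 s2 x f) = omega_tensor l2 e2 s2 l1 e1 s1 x (sw f)"
    by (simp add: sw_def fun_eq_iff omega_tensor_def tensor_act_def add.commute)
qed

lemma id_iso: "module_iso tensor_carrier act tensor_carrier act id"
  unfolding module_iso_def by (simp add: bij_betw_id)



lemma only_if:
  fixes l1 l2 l1' l2' s1 s2 s1' s2' e1 e2 e1' e2' :: complex
  assumes nz: "l1 \<noteq> 0" "l2 \<noteq> 0" "l1' \<noteq> 0" "l2' \<noteq> 0"
    and snz: "s1 \<noteq> 0" "s2 \<noteq> 0" "s1' \<noteq> 0" "s2' \<noteq> 0"
    and ne: "l1 \<noteq> l2" "l1' \<noteq> l2'"
    and iso: "module_iso tensor_carrier (omega_tensor l1 e1 s1 l2 e2 s2) tensor_carrier (omega_tensor l1' e1' s1' l2' e2' s2') \<phi>"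
  shows "((l1, e1, s1) = (l1', e1', s1') \<and> (l2, e2, s2) = (l2', e2', s2')) \<or>
         ((l1, e1, s1) = (l2', e2', s2') \<and> (l2, e2, s2) = (l1', e1', s1'))"
proof -
  let ?A = "omega_tensor l1 e1 s1 l2 e2 s2"
  let ?A' = "omega_tensor l1' e1' s1' l2' e2' s2'"
  define v :: "X \<Rightarrow> complex" where "v = (\<lambda>_. 1)"
  have v: "v \<in> tensor_carrier" unfolding v_def by (rule tc_one)
  define G where "G = \<phi> v"
  have bij: "bij_betw \<phi> tensor_carrier tensor_carrier" using iso unfolding module_iso_def by blast
  have Gin: "G \<in> tensor_carrier" using bij v unfolding G_def by (metis bij_betw_apply)
  have G0: "G \<noteq> (\<lambda>_. 0)"
  proof
    assume g0: "G = (\<lambda>_. 0)"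
    have "\<phi> (\<lambda>p. 0 * v p) = (\<lambda>q. 0 * \<phi> v q)" by (rule iso_scal[OF iso v])
    then have "\<phi> (\<lambda>p. 0 * v p) = \<phi> v" using g0 unfolding G_def by simp
    moreover have "(\<lambda>p. 0 * v p) \<in> tensor_carrier" using v by (rule tc_scale)
    ultimately have "(\<lambda>p. 0 * v p) = v" using bij v unfolding bij_betw_def inj_on_def by blast
    then show False unfolding v_def by (metis zero_neq_one mult_zero_left)
  qed
  then obtain x0 where x0: "G x0 \<noteq> 0" by (meson ext)
  define c where "c = (\<lambda>m. s1 * l1 powi m + s2 * l2 powi m)"
  have eig: "?A' (J m) G = (\<lambda>q. c m * G q)" for m
  proof -
    have "?A (J m) v = (\<lambda>p. c m * v p)"
    proof
      fix p :: X
      obtain s t s' t' where p: "p = ((s,t),(s',t'))" by (metis prod.collapse)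
      show "?A (J m) v p = c m * v p" unfolding p J_act by (simp add: v_def c_def algebra_simps)
    qed
    then have "\<phi> (?A (J m) v) = (\<lambda>q. c m * G q)" using iso_scal[OF iso v] unfolding G_def by simp
    then show ?thesis using iso_act[OF iso v] unfolding G_def by simp
  qed
  have A: "\<forall>m. c m = s1' * l1' powi m + s2' * l2' powi m" and invG: "invG G"
    using eigJ[OF nz(3,4) ne(2) snz(3,4) tc_Dfin[OF Gin] G0 eig] by blast+
  have E0: "s1 + s2 = s1' + s2'" using A[rule_format, of 0] by (simp add: c_def)
  have E1: "s1 * l1 + s2 * l2 = s1' * l1' + s2' * l2'" using A[rule_format, of 1] by (simp add: c_def)
  have E2: "s1 * l1^2 + s2 * l2^2 = s1' * l1'^2 + s2' * l2'^2" using A[rule_format, of 2] by (simp add: c_def)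
  have E3: "s1 * l1^3 + s2 * l2^3 = s1' * l1'^3 + s2' * l2'^3" using A[rule_format, of 3] by (simp add: c_def)
  have pm: "(l1 = l1' \<and> l2 = l2' \<and> s1 = s1' \<and> s2 = s2') \<or> (l1 = l2' \<and> l2 = l1' \<and> s1 = s2' \<and> s2 = s1')"
    using param_match[OF ne snz(1,2) E0 E1 E2 E3] .
  have sig1: "l1 + l2 = l1' + l2'" and sig2: "l1 * l2 = l1' * l2'" using pm by (auto simp: algebra_simps)
  have mL: "\<And>m. ?A (L m) v \<in> tensor_carrier" unfolding v_def by (rule tc_actL)
  have mH: "\<And>m. ?A (H m) v \<in> tensor_carrier" unfolding v_def by (rule tc_actH)
  have iv: "invG v" unfolding v_def by (rule invG_one)
  have kX: "(l1 - l2) * (e1 - e2) = (l1' - l2') * (e1' - e2')"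
  proof -
    have "\<phi> (Xop ?A (l1 + l2) (l1 * l2) v) = Xop ?A' (l1 + l2) (l1 * l2) G"
      using iso_Xop(1)[OF iso v mL mH] unfolding G_def .
    also have "\<dots> = (\<lambda>p. ((l1' - l2') * (e1' - e2')) * G p)"
      unfolding sig1 sig2 by (rule Xop_inv[OF invG nz(3,4)])
    finally have 1: "\<phi> (Xop ?A (l1 + l2) (l1 * l2) v) = (\<lambda>p. ((l1' - l2') * (e1' - e2')) * G p)" .
    have "\<phi> (Xop ?A (l1 + l2) (l1 * l2) v) = \<phi> (\<lambda>p. ((l1 - l2) * (e1 - e2)) * v p)"
      using Xop_inv[OF iv nz(1,2)] by simp
    also have "\<dots> = (\<lambda>p. ((l1 - l2) * (e1 - e2)) * G p)" using iso_scal[OF iso v] unfolding G_def .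
    finally have "(\<lambda>p. ((l1 - l2) * (e1 - e2)) * G p) = (\<lambda>p. ((l1' - l2') * (e1' - e2')) * G p)"
      using 1 by simp
    then have "((l1 - l2) * (e1 - e2)) * G x0 = ((l1' - l2') * (e1' - e2')) * G x0" by meson
    then show ?thesis using x0 by simp
  qed
  have kY: "(l1 - l2) * (l1 * e1 - l2 * e2) = (l1' - l2') * (l1' * e1' - l2' * e2')"
  proof -
    have "\<phi> (Yop ?A (l1 + l2) (l1 * l2) v) = Yop ?A' (l1 + l2) (l1 * l2) G"
      using iso_Xop(2)[OF iso v mL mH] unfolding G_def .
    also have "\<dots> = (\<lambda>p. ((l1' - l2') * (l1' * e1' - l2' * e2')) * G p)"
      unfolding sig1 sig2 by (rule Yop_inv[OF invG])
    finally have 1: "\<phi> (Yop ?A (l1 + l2) (l1 * l2) v) = (\<lambda>p. ((l1' - l2') * (l1' * e1' - l2' * e2')) * G p)" .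
    have "\<phi> (Yop ?A (l1 + l2) (l1 * l2) v) = \<phi> (\<lambda>p. ((l1 - l2) * (l1 * e1 - l2 * e2)) * v p)"
      using Yop_inv[OF iv] by simp
    also have "\<dots> = (\<lambda>p. ((l1 - l2) * (l1 * e1 - l2 * e2)) * G p)" using iso_scal[OF iso v] unfolding G_def .
    finally have "(\<lambda>p. ((l1 - l2) * (l1 * e1 - l2 * e2)) * G p) = (\<lambda>p. ((l1' - l2') * (l1' * e1' - l2' * e2')) * G p)"
      using 1 by simp
    then have "((l1 - l2) * (l1 * e1 - l2 * e2)) * G x0 = ((l1' - l2') * (l1' * e1' - l2' * e2')) * G x0" by meson
    then show ?thesis using x0 by simp
  qed
  have d: "l1 - l2 \<noteq> 0" using ne by simp
  show ?thesis
  proof (cases "l1 = l1' \<and> l2 = l2' \<and> s1 = s1' \<and> s2 = s2'")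
    case True
    then have a: "e1 - e2 = e1' - e2'" using kX d by simp
    have b: "l1 * e1 - l2 * e2 = l1 * e1' - l2 * e2'" using kY d True by simp
    have "(l1 - l2) * e1 = (l1 - l2) * e1'"
    proof -
      have "(l1 - l2) * e1 = (l1 * e1 - l2 * e2) - l2 * (e1 - e2)" by (simp add: algebra_simps)
      also have "\<dots> = (l1 * e1' - l2 * e2') - l2 * (e1' - e2')" using a b by simp
      also have "\<dots> = (l1 - l2) * e1'" by (simp add: algebra_simps)
      finally show ?thesis .
    qed
    then have "e1 = e1'" using d by simp
    then show ?thesis using True a by simp
  next
    case False
    then have T: "l1 = l2' \<and> l2 = l1' \<and> s1 = s2' \<and> s2 = s1'" using pm by blast
    have "(l1 - l2) * (e1 - e2) = (l2 - l1) * (e1' - e2')" using kX T by simp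
    also have "\<dots> = (l1 - l2) * (e2' - e1')" by (simp add: algebra_simps)
    finally have a: "e1 - e2 = e2' - e1'" using d by simp
    have "(l1 - l2) * (l1 * e1 - l2 * e2) = (l2 - l1) * (l2 * e1' - l1 * e2')" using kY T by simp
    also have "\<dots> = (l1 - l2) * (l1 * e2' - l2 * e1')" by (simp add: algebra_simps)
    finally have b: "l1 * e1 - l2 * e2 = l1 * e2' - l2 * e1'" using d by simp
    have "(l1 - l2) * e1 = (l1 - l2) * e2'"
    proof -
      have "(l1 - l2) * e1 = (l1 * e1 - l2 * e2) - l2 * (e1 - e2)" by (simp add: algebra_simps)
      also have "\<dots> = (l1 * e2' - l2 * e1') - l2 * (e2' - e1')" using a b by simp
      also have "\<dots> = (l1 - l2) * e2'" by (simp add: algebra_simps)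
      finally show ?thesis .
    qed
    then have "e1 = e2'" using d by simp
    then show ?thesis using T a by simp
  qed
qed


theorem theorem4p8:
  fixes l1 l2 l1' l2' s1 s2 s1' s2' e1 e2 e1' e2' :: complex
  assumes "l1 \<noteq> 0" "l2 \<noteq> 0" "l1' \<noteq> 0" "l2' \<noteq> 0"
    and "s1 \<noteq> 0" "s2 \<noteq> 0" "s1' \<noteq> 0" "s2' \<noteq> 0"
    and "l1 \<noteq> l2" "l1' \<noteq> l2'"
  shows "isomorphic_modules tensor_carrier (omega_tensor l1 e1 s1 l2 e2 s2)
                             tensor_carrier (omega_tensor l1' e1' s1' l2' e2' s2')
     \<longleftrightarrow> ((l1, e1, s1) = (l1', e1', s1') \<and> (l2, e2, s2) = (l2', e2', s2')) \<or>
         ((l1, e1, s1) = (l2', e2', s2') \<and> (l2, e2, s2) = (l1', e1', s1'))"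
proof
  assume "isomorphic_modules tensor_carrier (omega_tensor l1 e1 s1 l2 e2 s2)
                             tensor_carrier (omega_tensor l1' e1' s1' l2' e2' s2')"
  then obtain \<phi> where "module_iso tensor_carrier (omega_tensor l1 e1 s1 l2 e2 s2)
                             tensor_carrier (omega_tensor l1' e1' s1' l2' e2' s2') \<phi>"
    unfolding isomorphic_modules_def by blast
  from only_if[OF assms this] show "((l1, e1, s1) = (l1', e1', s1') \<and> (l2, e2, s2) = (l2', e2', s2')) \<or>
         ((l1, e1, s1) = (l2', e2', s2') \<and> (l2, e2, s2) = (l1', e1', s1'))" .
next
  assume "((l1, e1, s1) = (l1', e1', s1') \<and> (l2, e2, s2) = (l2', e2', s2')) \<or>
         ((l1, e1, s1) = (l2', e2', s2') \<and> (l2, e2, s2) = (l1', e1', s1'))"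
  then show "isomorphic_modules tensor_carrier (omega_tensor l1 e1 s1 l2 e2 s2)
                             tensor_carrier (omega_tensor l1' e1' s1' l2' e2' s2')"
  proof
    assume "(l1, e1, s1) = (l1', e1', s1') \<and> (l2, e2, s2) = (l2', e2', s2')"
    then show ?thesis unfolding isomorphic_modules_def using id_iso by auto
  next
    assume "(l1, e1, s1) = (l2', e2', s2') \<and> (l2, e2, s2) = (l1', e1', s1')"
    then show ?thesis unfolding isomorphic_modules_def using sw_iso[of l2' e2' s2' l1' e1' s1'] by auto
  qed
qed

end
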